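(* Let $n\in\mathbb{N}$ and suppose $n=\sum_{i=1}^{\ell}(-1)^{i-1}2^{\alpha_i}$ is an alternating binary representation of $n$. Then $\alpha_1=\lceil\log_2 n\rceil$ and, for each $i\in\{2,\dots,\ell\}$, \[ \alpha_i=\left\lceil \log_2\left((-1)^{i-1}\left(n-2^{\alpha_1}+2^{\alpha_2}-\cdots+(-1)^{i-1}2^{\alpha_{i-1}}\right)\right)\right\rceil . \] In particular, the alternating binary representation of $n$ is unique, and $(\alpha_2,\dots,\alpha_\ell)$ determines the alternating binary representation of $2^{\alpha_1}-n$.
   Context: An alternating binary representation (ABR) of $n\in\mathbb{N}$ is an expression $n=\sum_{i=1}^{\ell}(-1)^{i-1}2^{\alpha_i}$ with $\ell\ge 1$ and nonnegative integers $\alpha_1>\alpha_2>\cdots>\alpha_{\ell-1}>\alpha_\ell+1$; such $(\alpha_1,\dots,\alpha_\ell)$ is said to determine the ABR. *)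

theory Defs
  imports Complex_Main
begin

text \<open>A finite sequence (alpha_1,...,alpha_l) is stored as a list, alpha_i = as ! (i-1).
  Admissibility: l >= 1, alpha_1 > ... > alpha_(l-1) > alpha_l + 1.\<close>

definition abr_exponents :: "nat list \<Rightarrow> bool" where
  "abr_exponents as \<longleftrightarrow> length as \<ge> 1 \<and>
     (\<forall>i. 1 \<le> i \<and> i + 1 < length as \<longrightarrow> as ! (i - 1) > as ! i) \<and>
     (length as \<ge> 2 \<longrightarrow> as ! (length as - 2) > as ! (length as - 1) + 1)"

definition abr_value :: "nat list \<Rightarrow> int" where
  "abr_value as = (\<Sum>i\<in>{1..length as}. (-1) ^ (i - 1) * 2 ^ (as ! (i - 1)))"

definition determines_abr :: "nat list \<Rightarrow> nat \<Rightarrow> bool" where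
  "determines_abr as n \<longleftrightarrow> abr_exponents as \<and> int n = abr_value as"

end

theory Submission
  imports Defs
begin

definition psum :: "nat \<Rightarrow> nat list \<Rightarrow> int" where
  "psum k as = (\<Sum>j\<in>{1..k}. (-1) ^ (j - 1) * 2 ^ (as ! (j - 1)))"

lemma psum_0[simp]: "psum 0 as = 0" by (simp add: psum_def)

lemma psum_Suc_Cons[simp]: "psum (Suc k) (a # as) = 2 ^ a - psum k as"
proof -
  have "psum (Suc k) (a # as) = 2^a + (\<Sum>j\<in>{Suc 1..Suc k}. (-1) ^ (j - 1) * 2 ^ ((a#as) ! (j - 1)))"
    unfolding psum_def by (subst sum.atLeast_Suc_atMost) auto
  also have "(\<Sum>j\<in>{Suc 1..Suc k}. (-1) ^ (j - 1) * 2 ^ ((a#as) ! (j - 1)) :: int)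
      = (\<Sum>j\<in>{1..k}. (-1) ^ j * 2 ^ ((a#as) ! j))"
    by (subst sum.shift_bounds_cl_Suc_ivl) simp
  also have "\<dots> = (\<Sum>j\<in>{1..k}. - ((-1) ^ (j - 1) * 2 ^ (as ! (j - 1))))"
  proof (rule sum.cong)
    fix j assume "j \<in> {1..k}"
    then obtain m where "j = Suc m" by (cases j) auto
    then show "(-1) ^ j * 2 ^ ((a#as) ! j) = - ((-1) ^ (j - 1) * 2 ^ (as ! (j - 1)) :: int)" by simp
  qed simp
  finally show ?thesis by (simp add: psum_def sum_negf)
qed

lemma abr_value_psum: "abr_value as = psum (length as) as"
  by (simp add: abr_value_def psum_def)

lemma abr_value_Nil[simp]: "abr_value [] = 0" by (simp add: abr_value_psum)
lemma abr_value_Cons[simp]: "abr_value (a # as) = 2 ^ a - abr_value as"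
  by (simp add: abr_value_psum)

lemma psum_split: "k \<le> length as \<Longrightarrow> abr_value as = psum k as + (-1)^k * abr_value (drop k as)"
proof (induction as arbitrary: k)
  case Nil then show ?case by simp
next
  case (Cons a as) then show ?case
    by (cases k) (auto simp: algebra_simps)
qed

lemma abr_exp_tl:
  assumes "abr_exponents (a # b # rest)"
  shows "abr_exponents (b # rest) \<and> a > b \<and> (rest = [] \<longrightarrow> a > b + 1)"
proof -
  have A: "\<And>i. 1 \<le> i \<Longrightarrow> i + 1 < length (a#b#rest) \<Longrightarrow> (a#b#rest) ! (i - 1) > (a#b#rest) ! i"
    and B: "(a#b#rest) ! (length (a#b#rest) - 2) > (a#b#rest) ! (length (a#b#rest) - 1) + 1"
    using assms unfolding abr_exponents_def by auto
  have "abr_exponents (b # rest)"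
    unfolding abr_exponents_def
  proof (intro conjI allI impI)
    fix i assume "1 \<le> i \<and> i + 1 < length (b # rest)"
    then show "(b # rest) ! (i - 1) > (b # rest) ! i" using A[of "Suc i"]
      by (cases i) auto
  next
    assume "2 \<le> length (b # rest)"
    then obtain m where m: "length rest = Suc m" by (cases rest) auto
    then show "(b # rest) ! (length (b # rest) - 2) > (b # rest) ! (length (b # rest) - 1) + 1"
      using B by simp
  qed simp
  moreover have "a > b"
  proof (cases rest)
    case Nil then show ?thesis using B by simp
  next
    case (Cons c r) then show ?thesis using A[of 1] by simp
  qed
  moreover have "rest = [] \<longrightarrow> a > b + 1" using B by auto
  ultimately show ?thesis by blast
qed

lemma abr_exp_drop:
  "abr_exponents as \<Longrightarrow> k < length as \<Longrightarrow> abr_exponents (drop k as)"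
proof (induction k arbitrary: as)
  case 0 then show ?case by simp
next
  case (Suc k)
  then obtain a b rest where as: "as = a # b # rest"
    by (cases as; cases "tl as") auto
  then have "abr_exponents (b # rest)" using abr_exp_tl Suc.prems by blast
  then show ?case using Suc.IH[of "b # rest"] Suc.prems as by simp
qed

lemma abr_bounds:
  "abr_exponents as \<Longrightarrow> 2 ^ (hd as) < 2 * abr_value as \<and> abr_value as \<le> 2 ^ (hd as)
     \<and> (length as \<ge> 2 \<longrightarrow> abr_value as < 2 ^ hd as)"
proof (induction as rule: induct_list012)
  case 1 then show ?case by (simp add: abr_exponents_def)
next
  case (2 a) then show ?case by simp
next
  case (3 a b rest)
  from abr_exp_tl[OF 3(3)] have t: "abr_exponents (b # rest)" "a > b" "rest = [] \<longrightarrow> a > b + 1"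
    by auto
  from 3(2)[OF t(1)] have ih: "2 ^ b < 2 * abr_value (b # rest)" "abr_value (b # rest) \<le> 2 ^ b"
    "rest \<noteq> [] \<longrightarrow> abr_value (b # rest) < 2 ^ b" by (auto simp: neq_Nil_conv)
  have pos: "abr_value (b # rest) > 0" using ih(1) by (smt (verit) zero_less_power)
  have "2 * abr_value (b # rest) < 2 ^ a"
  proof (cases "a \<ge> b + 2")
    case True
    then have "(2::int) ^ (b + 2) \<le> 2 ^ a" by (intro power_increasing) auto
    moreover have "(2::int)^(b+2) = 4*2^b" by simp
    moreover have "(0::int) < 2^b" by simp
    ultimately show ?thesis using ih(2) by linarith
  next
    case False
    then have "a = b + 1" "rest \<noteq> []" using t by auto
    then show ?thesis using ih(3) by simp
  qed
  then show ?case using pos by simp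
qed

lemma abr_ceil:
  assumes "abr_exponents as"
  shows "\<lceil>log 2 (real_of_int (abr_value as))\<rceil> = int (hd as)"
proof -
  let ?v = "real_of_int (abr_value as)" and ?a = "hd as"
  from abr_bounds[OF assms] have b0: "2 ^ ?a < 2 * abr_value as" "abr_value as \<le> 2 ^ ?a"
    by auto
  have b: "2 ^ ?a < 2 * ?v" "?v \<le> 2 ^ ?a"
    using b0[folded of_int_less_iff[where 'a=real] of_int_le_iff[where 'a=real]] by simp_all
  have vpos: "?v > 0" using b(1) by (smt (verit) zero_less_power)
  have "log 2 ?v \<le> real ?a"
  proof -
    have "log 2 ?v \<le> log 2 (2 ^ ?a)" using b(2) vpos by (subst log_le_cancel_iff) auto
    then show ?thesis by (simp add: log_nat_power)
  qed
  moreover have "real ?a - 1 < log 2 ?v"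
  proof -
    have "log 2 (2 ^ ?a) < log 2 (2 * ?v)" using b(1) by (intro log_less) auto
    then show ?thesis using vpos by (simp add: log_mult log_nat_power)
  qed
  ultimately show ?thesis by (intro ceiling_unique) auto
qed

lemma abr_unique:
  "abr_exponents as \<Longrightarrow> abr_exponents bs \<Longrightarrow> abr_value as = abr_value bs \<Longrightarrow> as = bs"
proof (induction as arbitrary: bs)
  case Nil then show ?case by (simp add: abr_exponents_def)
next
  case (Cons a as)
  obtain b bs' where bs: "bs = b # bs'"
    using Cons.prems(2) by (cases bs) (auto simp: abr_exponents_def)
  have "int (hd (a#as)) = int (hd bs)" using abr_ceil[OF Cons.prems(1)] abr_ceil[OF Cons.prems(2)] Cons.prems(3)
    by metis
  then have "int a = int b" using bs by simp
  then have ab: "a = b" by simp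
  show ?case
  proof (cases "as = [] \<or> bs' = []")
    case True
    have "length (a#as) \<ge> 2 \<Longrightarrow> abr_value (a#as) < 2^a" using abr_bounds[OF Cons.prems(1)] by simp
    moreover have "length bs \<ge> 2 \<Longrightarrow> abr_value bs < 2^b" using abr_bounds[OF Cons.prems(2)] bs by simp
    ultimately show ?thesis using True Cons.prems(3) ab bs by (cases as; cases bs'; force)
  next
    case False
    then obtain c r d s where cr: "as = c # r" "bs' = d # s" by (auto simp: neq_Nil_conv)
    have "abr_exponents as" using abr_exp_tl Cons.prems(1) cr by blast
    moreover have "abr_exponents bs'" using abr_exp_tl Cons.prems(2) cr bs by blast
    moreover have "abr_value as = abr_value bs'" using Cons.prems(3) bs ab by simp
    ultimately show ?thesis using Cons.IH ab bs by simp
  qed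
qed

theorem lemma19:
  fixes n :: nat and as :: "nat list"
  assumes "determines_abr as n"
  shows "int (as ! 0) = \<lceil>log 2 (real n)\<rceil>
    \<and> (\<forall>i\<in>{2..length as}.
          int (as ! (i - 1)) =
            \<lceil>log 2 (real_of_int ((-1) ^ (i - 1) *
               (int n - (\<Sum>j\<in>{1..i - 1}. (-1) ^ (j - 1) * 2 ^ (as ! (j - 1))))))\<rceil>)
    \<and> (\<forall>bs. determines_abr bs n \<longrightarrow> bs = as)
    \<and> (length as \<ge> 2 \<longrightarrow> determines_abr (tl as) (2 ^ (as ! 0) - n))"
proof -
  have E: "abr_exponents as" and V: "int n = abr_value as"
    using assms by (auto simp: determines_abr_def)
  have ne: "as \<noteq> []" using E by (auto simp: abr_exponents_def)
  have rn: "real n = real_of_int (abr_value as)" using V by (metis of_int_of_nat_eq)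
  have P1: "int (as ! 0) = \<lceil>log 2 (real n)\<rceil>"
    unfolding rn using abr_ceil[OF E] V ne by (simp add: hd_conv_nth)
  have P2: "int (as ! (i - 1)) =
            \<lceil>log 2 (real_of_int ((-1) ^ (i - 1) *
               (int n - (\<Sum>j\<in>{1..i - 1}. (-1) ^ (j - 1) * 2 ^ (as ! (j - 1))))))\<rceil>"
    if i: "i \<in> {2..length as}" for i
  proof -
    let ?k = "i - 1"
    have k: "?k < length as" using i by auto
    have "(-1) ^ ?k * (int n - psum ?k as) = ((-1::int) ^ ?k * (-1) ^ ?k) * abr_value (drop ?k as)"
      using psum_split[of ?k as] k V by simp
    also have "\<dots> = abr_value (drop ?k as)" by (simp flip: power_add)
    finally have eq: "(-1) ^ ?k * (int n - psum ?k as) = abr_value (drop ?k as)" .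
    have "hd (drop ?k as) = as ! ?k" using k by (simp add: hd_drop_conv_nth)
    then show ?thesis using abr_ceil[OF abr_exp_drop[OF E k]] eq by (simp add: psum_def)
  qed
  have P3: "\<forall>bs. determines_abr bs n \<longrightarrow> bs = as"
    using abr_unique E V by (auto simp: determines_abr_def)
  have P4: "determines_abr (tl as) (2 ^ (as ! 0) - n)" if l: "length as \<ge> 2"
  proof -
    obtain a b r where as: "as = a # b # r" using l by (cases as; cases "tl as") auto
    have T: "abr_exponents (tl as)" using abr_exp_tl E as by auto
    have "abr_value as \<le> 2 ^ a" using abr_bounds[OF E] as by (simp only: list.sel)
    then have "int n \<le> int (2 ^ a)" using V by simp
    then have "n \<le> 2 ^ a" by linarith
    then have "int (2 ^ a - n) = 2 ^ a - abr_value as" using V by (simp add: of_nat_diff)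
    also have "\<dots> = abr_value (tl as)" using as by (simp only: abr_value_Cons list.sel)
    finally show ?thesis using as T by (simp add: determines_abr_def)
  qed
  show ?thesis using P1 P2 P3 P4 by blast
qed

end
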